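(* Let $X_0,X_1,\dots,X_N$ be vectors in $\mathbf{R}^m$ such that (1) $X_0=0$; (2) for each $1\le t\le N$, $X_t$ and $X_{t-1}$ differ in exactly one coordinate, by $+1$ or $-1$; (3) for every $1\le i\le m$ there exists $t$ such that $X_t$ and $X_{t-1}$ differ in the $i$-th coordinate. Then there is a subset $X_{t_1},\dots,X_{t_m}$ of these vectors that forms a basis of $\mathbf{R}^m$. *)

theory Defs
  imports "HOL-Analysis.Analysis"
begin

end

theory Submission
  imports Defs
begin

theorem lemma4p1:
  fixes X :: "nat \<Rightarrow> real ^ 'm" and N :: nat
  assumes start: "X 0 = 0"
    and steps: "\<And>t. 1 \<le> t \<Longrightarrow> t \<le> N \<Longrightarrow>
        \<exists>i. (X t $ i - X (t - 1) $ i = 1 \<or> X t $ i - X (t - 1) $ i = -1) \<and>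
            (\<forall>j. j \<noteq> i \<longrightarrow> X t $ j = X (t - 1) $ j)"
    and all_coords: "\<And>i. \<exists>t. 1 \<le> t \<and> t \<le> N \<and> X t $ i \<noteq> X (t - 1) $ i"
  shows "\<exists>B. B \<subseteq> X ` {0..N} \<and> independent B \<and> span B = UNIV \<and> card B = CARD('m)"
proof -
  let ?S = "X ` {0..N}"
  have ax: "axis i 1 \<in> span ?S" for i
  proof -
    obtain t where t: "1 \<le> t" "t \<le> N" "X t $ i \<noteq> X (t - 1) $ i" using all_coords by blast
    obtain k where k: "X t $ k - X (t - 1) $ k = 1 \<or> X t $ k - X (t - 1) $ k = -1"
        "\<forall>j. j \<noteq> k \<longrightarrow> X t $ j = X (t - 1) $ j" using steps[OF t(1,2)] by blast
    have ki: "k = i" using k(2) t(3) by metis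
    define c where "c = X t $ i - X (t - 1) $ i"
    have cc: "c * c = 1" using k(1) ki c_def by auto
    have eq: "axis i 1 = c *\<^sub>R (X t - X (t - 1))"
    proof (rule vec_eq_iff[THEN iffD2], intro allI)
      fix j show "axis i 1 $ j = (c *\<^sub>R (X t - X (t - 1))) $ j"
        using k(2) ki cc by (cases "j = i") (auto simp: axis_def c_def)
    qed
    have "X t \<in> span ?S" "X (t - 1) \<in> span ?S" using t by (auto intro!: span_base)
    then have "X t - X (t - 1) \<in> span ?S" by (rule span_diff)
    then show ?thesis unfolding eq by (rule span_scale)
  qed
  have full: "span ?S = UNIV"
  proof (rule set_eqI, rule iffI[OF _ ])
    fix x :: "real ^ 'm" show "x \<in> span ?S" if "x \<in> UNIV"
    proof -
      have "(\<Sum>i\<in>UNIV. (x$i) *s axis i 1) \<in> span ?S"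
        by (rule span_sum) (simp add: scalar_mult_eq_scaleR span_scale ax)
      then show ?thesis by (simp add: basis_expansion)
    qed
  qed simp
  obtain B where B: "B \<subseteq> ?S" "independent B" "?S \<subseteq> span B"
    by (rule maximal_independent_subset)
  have sp: "span B = UNIV"
    using B full by (metis span_mono span_span top.extremum_uniqueI)
  have "card B = dim (span B)" using B(2) by (rule dim_span_eq_card_independent[symmetric])
  also have "\<dots> = CARD('m)" using sp by simp
  finally show ?thesis using B sp by blast
qed

end
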